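(* A general binary quartic $p\in H_4(\mathbb{C}^2)$ can be written as $$p(x,y) = (t_1x^2+t_2xy+t_3y^2)^2 + (t_4x+t_5y)^4, \qquad t_i\in\mathbb{C},$$ in exactly six different ways. Moreover, the set of the six resulting ratios $t_5/t_4\in\mathbb{C}\cup\{\infty\}$ is the image of the set $\{0,\infty,1,-1,i,-i\}$ under a Möbius transformation.
   Context: $H_d(\mathbb{C}^n)$ denotes the complex vector space of homogeneous polynomials of degree $d$ in $n$ variables. "A general $p$ has property P" means P holds for all $p$ in a nonempty Zariski-open subset of $H_d(\mathbb{C}^n)$. Two representations are considered the same if they agree up to replacing the quadratic form by its negative and replacing the linear form $\ell$ by $\zeta\ell$ with $\zeta^4=1$. *)

theory Defs
  imports Complex_Main
begin

text \<open>A binary quartic p in H_4(C^2) is given by its coefficient vector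
  a 0, ..., a 4 (coordinates of index >= 5 are ignored):
  p(x,y) = sum_{k=0..4} a k * x^(4-k) * y^k.\<close>

definition quartic :: "(nat \<Rightarrow> complex) \<Rightarrow> complex \<Rightarrow> complex \<Rightarrow> complex" where
  "quartic a x y = (\<Sum>k\<le>4. a k * x ^ (4 - k) * y ^ k)"

inductive poly_fun :: "nat \<Rightarrow> ((nat \<Rightarrow> complex) \<Rightarrow> complex) \<Rightarrow> bool" for n where
  pf_const: "poly_fun n (\<lambda>a. c)"
| pf_var: "i < n \<Longrightarrow> poly_fun n (\<lambda>a. a i)"
| pf_add: "poly_fun n f \<Longrightarrow> poly_fun n g \<Longrightarrow> poly_fun n (\<lambda>a. f a + g a)"
| pf_mult: "poly_fun n f \<Longrightarrow> poly_fun n g \<Longrightarrow> poly_fun n (\<lambda>a. f a * g a)"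

text \<open>A property holds for a general binary quartic iff it holds on a nonempty
  Zariski-open subset of H_4(C^2) = C^5; equivalently on the non-vanishing locus
  of some polynomial function that is not identically zero.\<close>

definition general_quartic :: "((nat \<Rightarrow> complex) \<Rightarrow> bool) \<Rightarrow> bool" where
  "general_quartic P \<longleftrightarrow>
     (\<exists>g. poly_fun 5 g \<and> (\<exists>a. g a \<noteq> 0) \<and> (\<forall>a. g a \<noteq> 0 \<longrightarrow> P a))"

type_synonym rep = "complex \<times> complex \<times> complex \<times> complex \<times> complex"

definition reps :: "(nat \<Rightarrow> complex) \<Rightarrow> rep set" where
  "reps a = {(t1, t2, t3, t4, t5). \<forall>x y.
      quartic a x y = (t1 * x^2 + t2 * x * y + t3 * y^2)^2 + (t4 * x + t5 * y)^4}"

text \<open>Two representations are the same if they agree up to q -> -q and l -> zeta l with zeta^4 = 1.\<close>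

definition rep_equiv :: "(rep \<times> rep) set" where
  "rep_equiv = {((s1, s2, s3, s4, s5), (t1, t2, t3, t4, t5)).
      (\<exists>\<epsilon>::complex. (\<epsilon> = 1 \<or> \<epsilon> = -1) \<and> t1 = \<epsilon> * s1 \<and> t2 = \<epsilon> * s2 \<and> t3 = \<epsilon> * s3) \<and>
      (\<exists>\<zeta>::complex. \<zeta> ^ 4 = 1 \<and> t4 = \<zeta> * s4 \<and> t5 = \<zeta> * s5)}"

text \<open>Points of C \<union> {\<infinity>}: Some z is z, None is \<infinity>.\<close>

definition ratio :: "rep \<Rightarrow> complex option" where
  "ratio t = (case t of (t1, t2, t3, t4, t5) \<Rightarrow> if t4 = 0 then None else Some (t5 / t4))"

definition mobius :: "complex \<Rightarrow> complex \<Rightarrow> complex \<Rightarrow> complex \<Rightarrow> complex option \<Rightarrow> complex option" where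
  "mobius \<alpha> \<beta> \<gamma> \<delta> z = (case z of
      None \<Rightarrow> (if \<gamma> = 0 then None else Some (\<alpha> / \<gamma>))
    | Some w \<Rightarrow> (if \<gamma> * w + \<delta> = 0 then None else Some ((\<alpha> * w + \<beta>) / (\<gamma> * w + \<delta>))))"

end

theory Submission
  imports Defs "HOL-Computational_Algebra.Fundamental_Theorem_Algebra"
begin


lemma quartic_expand: "quartic a x y = a 0 * x^4 + a 1 * x^3 * y + a 2 * x^2*y^2 + a 3 * x * y^3 + a 4 * y^4"
  by (simp add: quartic_def numeral_eq_Suc atMost_Suc)

lemma uni_coeff:
  fixes c0 c1 c2 c3 c4 :: complex
  assumes "\<And>x. c0*x^4 + c1*x^3 + c2*x^2 + c3*x + c4 = 0"
  shows "c0=0 \<and> c1=0 \<and> c2 = 0 \<and> c3=0 \<and> c4=0"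
proof -
  have e0: "c4 = 0" using assms[of 0] by simp
  have e1: "c0 + c1 + c2 + c3 + c4 = 0" using assms[of 1] by simp
  have e2: "c0 - c1 + c2 - c3 + c4 = 0" using assms[of "-1"] by simp
  have e3: "16*c0 + 8*c1 + 4*c2 + 2*c3 + c4 = 0" using assms[of 2] by (simp add: algebra_simps)
  have e4: "16*c0 - 8*c1 + 4*c2 - 2*c3 + c4 = 0" using assms[of "-2"] by (simp add: algebra_simps)
  show ?thesis using e0 e1 e2 e3 e4 by algebra
qed

lemma reps_iff:
  "(t1,t2,t3,t4,t5) \<in> reps a \<longleftrightarrow>
    a 0 = t1^2 + t4^4 \<and> a 1 = 2*t1*t2 + 4*t4^3*t5 \<and> a 2 = t2^2 + 2*t1*t3 + 6*t4^2*t5^2 \<and>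
    a 3 = 2*t2*t3 + 4*t4*t5^3 \<and> a 4 = t3^2 + t5^4"
proof
  assume "(t1,t2,t3,t4,t5) \<in> reps a"
  then have h: "\<And>x y. quartic a x y = (t1 * x^2 + t2 * x * y + t3 * y^2)^2 + (t4 * x + t5 * y)^4"
    by (auto simp: reps_def)
  have "\<And>x. (a 0 - (t1^2 + t4^4))*x^4 + (a 1 - (2*t1*t2 + 4*t4^3*t5))*x^3
     + (a 2 - (t2^2 + 2*t1*t3 + 6*t4^2*t5^2))*x^2 + (a 3 - (2*t2*t3 + 4*t4*t5^3))*x + (a 4 - (t3^2 + t5^4)) = 0"
  proof -
    fix x
    have "a 0 * x^4 + a 1 * x^3 + a 2 * x^2 + a 3 * x + a 4 = (t1*x^2+t2*x+t3)^2 + (t4*x+t5)^4"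
      using h[of x 1] by (simp add: quartic_expand)
    then show "?thesis x" by algebra
  qed
  from uni_coeff[OF this] show "a 0 = t1^2 + t4^4 \<and> a 1 = 2*t1*t2 + 4*t4^3*t5 \<and> a 2 = t2^2 + 2*t1*t3 + 6*t4^2*t5^2 \<and>
    a 3 = 2*t2*t3 + 4*t4*t5^3 \<and> a 4 = t3^2 + t5^4" by simp
next
  assume "a 0 = t1^2 + t4^4 \<and> a 1 = 2*t1*t2 + 4*t4^3*t5 \<and> a 2 = t2^2 + 2*t1*t3 + 6*t4^2*t5^2 \<and>
    a 3 = 2*t2*t3 + 4*t4*t5^3 \<and> a 4 = t3^2 + t5^4"
  then show "(t1,t2,t3,t4,t5) \<in> reps a"
    unfolding reps_def quartic_expand by (simp add: power2_eq_square power3_eq_cube power4_eq_xxxx algebra_simps)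
qed

lemma quartic_roots:
  fixes a :: "nat \<Rightarrow> complex"
  assumes a0: "a 0 \<noteq> 0"
  obtains r1 r2 r3 r4 where "a 1 = - a 0 * (r1+r2+r3+r4)"
    "a 2 = a 0 * (r1*r2+r1*r3+r1*r4+r2*r3+r2*r4+r3*r4)"
    "a 3 = - a 0 * (r1*r2*r3+r1*r2*r4+r1*r3*r4+r2*r3*r4)"
    "a 4 = a 0 * (r1*r2*r3*r4)"
proof -
  define p where "p = [:a 4, a 3, a 2, a 1, a 0:]"
  have dp: "degree p = 4" using a0 by (simp add: p_def)
  have lp: "lead_coeff p = a 0" using a0 by (simp add: p_def)
  obtain root where r: "smult (lead_coeff p) (\<Prod>i<degree p. [:-root i, 1:]) = p"
    using complex_poly_decompose' by blast
  have pe: "\<And>x. poly p x = a 0 * ((x - root 0) * (x - root 1) * (x - root 2) * (x - root 3))"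
  proof -
    fix x
    have "poly p x = poly (smult (lead_coeff p) (\<Prod>i<degree p. [:-root i, 1:])) x" using r by simp
    also have "\<dots> = a 0 * (\<Prod>i<4. (x - root i))" unfolding lp poly_smult poly_prod by (simp add: dp)
    also have "(\<Prod>i<4::nat. (x - root i)) = (x - root 0) * (x - root 1) * (x - root 2) * (x - root 3)"
      by (simp add: numeral_eq_Suc lessThan_Suc)
    finally show "?thesis x" .
  qed
  let ?r1 = "root 0" and ?r2 = "root 1" and ?r3 = "root 2" and ?r4 = "root 3"
  have "\<And>x. (a 0 - a 0)*x^4 + (a 1 - (- a 0 * (?r1+?r2+?r3+?r4)))*x^3
     + (a 2 - a 0 * (?r1*?r2+?r1*?r3+?r1*?r4+?r2*?r3+?r2*?r4+?r3*?r4))*x^2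
     + (a 3 - (- a 0 * (?r1*?r2*?r3+?r1*?r2*?r4+?r1*?r3*?r4+?r2*?r3*?r4)))*x + (a 4 - a 0 * (?r1*?r2*?r3*?r4)) = 0"
  proof -
    fix x
    have "a 4 + x * (a 3 + x * (a 2 + x * (a 1 + x * a 0))) = a 0 * ((x - ?r1) * (x - ?r2) * (x - ?r3) * (x - ?r4))"
      using pe[of x] by (simp add: p_def)
    then show "?thesis x" by algebra
  qed
  from uni_coeff[OF this] have "a 1 = - a 0 * (?r1+?r2+?r3+?r4)"
    "a 2 = a 0 * (?r1*?r2+?r1*?r3+?r1*?r4+?r2*?r3+?r2*?r4+?r3*?r4)"
    "a 3 = - a 0 * (?r1*?r2*?r3+?r1*?r2*?r4+?r1*?r3*?r4+?r2*?r3*?r4)"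
    "a 4 = a 0 * (?r1*?r2*?r3*?r4)" by (simp_all only: right_minus_eq)
  then show ?thesis by (rule that)
qed



definition Kq :: "(nat \<Rightarrow> complex) \<Rightarrow> complex" where
  "Kq a = a 1^3 - 4*a 0*a 1*a 2 + 8*a 0^2*a 3"
definition cc4 where "cc4 a (\<rho>::complex) = a 0*\<rho>^4 - a 1*\<rho>^3 + a 2*\<rho>^2 - a 3*\<rho> + a 4"
definition cc3 where "cc3 a (\<rho>::complex) = -4*a 0*\<rho>^3 + 3*a 1*\<rho>^2 - 2*a 2*\<rho> + a 3"
definition cc2 where "cc2 a (\<rho>::complex) = 6*a 0*\<rho>^2 - 3*a 1*\<rho> + a 2"
definition cc1 where "cc1 a (\<rho>::complex) = -4*a 0*\<rho> + a 1"
definition HH where "HH a \<rho> = 8*cc4 a \<rho>^2*cc1 a \<rho> - 4*cc2 a \<rho>*cc3 a \<rho>*cc4 a \<rho> + cc3 a \<rho>^3"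

lemma reps_E:
  assumes "(t1,t2,t3,t4,t5) \<in> reps a"
  shows "a 0 = t1^2 + t4^4" "a 1 = 2*t1*t2 + 4*t4^3*t5" "a 2 = t2^2 + 2*t1*t3 + 6*t4^2*t5^2"
    "a 3 = 2*t2*t3 + 4*t4*t5^3" "a 4 = t3^2 + t5^4"
  using assms unfolding reps_iff by simp_all

lemma R1: assumes "(t1,t2,t3,0,t5) \<in> reps a" shows "Kq a = 0"
proof -
  note e = reps_E[OF assms]
  show ?thesis unfolding Kq_def e by simp algebra
qed

lemma shift_fwd:
  assumes "(t1,t2,t3,t4,\<rho>*t4) \<in> reps a"
  shows "cc1 a \<rho> = 2*t1*(t2 - 2*\<rho>*t1)"
    "cc2 a \<rho> = (t2 - 2*\<rho>*t1)^2 + 2*t1*(t3 - \<rho>*t2 + \<rho>^2*t1)"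
    "cc3 a \<rho> = 2*(t2 - 2*\<rho>*t1)*(t3 - \<rho>*t2 + \<rho>^2*t1)"
    "cc4 a \<rho> = (t3 - \<rho>*t2 + \<rho>^2*t1)^2"
proof -
  note e = reps_E[OF assms]
  show "cc1 a \<rho> = 2*t1*(t2 - 2*\<rho>*t1)" unfolding cc1_def e by algebra
  show "cc2 a \<rho> = (t2 - 2*\<rho>*t1)^2 + 2*t1*(t3 - \<rho>*t2 + \<rho>^2*t1)" unfolding cc2_def e by algebra
  show "cc3 a \<rho> = 2*(t2 - 2*\<rho>*t1)*(t3 - \<rho>*t2 + \<rho>^2*t1)" unfolding cc3_def e by algebra
  show "cc4 a \<rho> = (t3 - \<rho>*t2 + \<rho>^2*t1)^2" unfolding cc4_def e by algebra
qed

lemma R2: assumes "(t1,t2,t3,t4,t5) \<in> reps a" "t4 \<noteq> 0" shows "HH a (t5/t4) = 0"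
proof -
  have "t5 = (t5/t4)*t4" using assms(2) by simp
  then have "(t1,t2,t3,t4,(t5/t4)*t4) \<in> reps a" using assms(1) by simp
  note s = shift_fwd[OF this]
  show ?thesis unfolding HH_def s by algebra
qed

lemma shift_bwd:
  assumes "cc1 a \<rho> = 2*u*v" "cc2 a \<rho> = v^2 + 2*u*w" "cc3 a \<rho> = 2*v*w" "cc4 a \<rho> = w^2"
  shows "a 1 = 2*u*(v + 2*\<rho>*u) + 4*(a 0 - u^2)*\<rho>"
    "a 2 = (v + 2*\<rho>*u)^2 + 2*u*(w + \<rho>*(v + 2*\<rho>*u) - \<rho>^2*u) + 6*(a 0 - u^2)*\<rho>^2"
    "a 3 = 2*(v + 2*\<rho>*u)*(w + \<rho>*(v + 2*\<rho>*u) - \<rho>^2*u) + 4*(a 0 - u^2)*\<rho>^3"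
    "a 4 = (w + \<rho>*(v + 2*\<rho>*u) - \<rho>^2*u)^2 + (a 0 - u^2)*\<rho>^4"
  using assms unfolding cc1_def cc2_def cc3_def cc4_def by algebra+



definition Dq :: "(nat \<Rightarrow> complex) \<Rightarrow> complex" where
  "Dq A = (let a = A 0; b = A 1; c = A 2; d = A 3; e = A 4 in
   256*a^3*e^3 - 192*a^2*b*d*e^2 - 128*a^2*c^2*e^2 + 144*a^2*c*d^2*e - 27*a^2*d^4 + 144*a*b^2*c*e^2 - 6*a*b^2*d^2*e - 80*a*b*c^2*d*e + 18*a*b*c*d^3 + 16*a*c^4*e - 4*a*c^3*d^2 - 27*b^4*e^2 + 18*b^3*c*d*e - 4*b^3*d^3 - 4*b^2*c^3*e + b^2*c^2*d^2)"

definition kA :: "complex \<Rightarrow> complex \<Rightarrow> complex \<Rightarrow> complex \<Rightarrow> complex" where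
  "kA x1 x2 x3 x4 = x1+x2-x3-x4"
definition kB :: "complex \<Rightarrow> complex \<Rightarrow> complex \<Rightarrow> complex \<Rightarrow> complex" where
  "kB x1 x2 x3 x4 = 2*(x1*x2-x3*x4)"
definition kC :: "complex \<Rightarrow> complex \<Rightarrow> complex \<Rightarrow> complex \<Rightarrow> complex" where
  "kC x1 x2 x3 x4 = x1*x2*(x3+x4) - (x1+x2)*x3*x4"
definition kpol where "kpol x1 x2 x3 x4 \<rho> = kA x1 x2 x3 x4*\<rho>^2 + kB x1 x2 x3 x4*\<rho> + kC x1 x2 x3 x4"

lemma kdisc: "(kB x1 x2 x3 x4)^2 - 4*kA x1 x2 x3 x4*kC x1 x2 x3 x4 = 4*(x1-x3)*(x1-x4)*(x2-x3)*(x2-x4)"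
  unfolding kA_def kB_def kC_def by algebra

lemma kpol_at: "kpol x1 x2 x3 x4 (-x1) = (x1-x2)*(x1-x3)*(x1-x4)"
  "kpol x1 x2 x3 x4 (-x2) = (x2-x1)*(x2-x3)*(x2-x4)"
  "kpol x1 x2 x3 x4 (-x3) = -((x3-x1)*(x3-x2)*(x3-x4))"
  "kpol x1 x2 x3 x4 (-x4) = -((x4-x1)*(x4-x2)*(x4-x3))"
  unfolding kpol_def kA_def kB_def kC_def by algebra+

lemma apolar:
  "2*kA r1 r2 r3 r4*kC r1 r3 r2 r4 + 2*kA r1 r3 r2 r4*kC r1 r2 r3 r4 - kB r1 r2 r3 r4*kB r1 r3 r2 r4 = 0"
  "2*kA r1 r2 r3 r4*kC r1 r4 r2 r3 + 2*kA r1 r4 r2 r3*kC r1 r2 r3 r4 - kB r1 r2 r3 r4*kB r1 r4 r2 r3 = 0"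
  "2*kA r1 r3 r2 r4*kC r1 r4 r2 r3 + 2*kA r1 r4 r2 r3*kC r1 r3 r2 r4 - kB r1 r3 r2 r4*kB r1 r4 r2 r3 = 0"
  unfolding kA_def kB_def kC_def by algebra+

context
  fixes a :: "nat \<Rightarrow> complex" and r1 r2 r3 r4 :: complex
  assumes h1: "a 1 = - a 0 * (r1+r2+r3+r4)"
    and h2: "a 2 = a 0 * (r1*r2+r1*r3+r1*r4+r2*r3+r2*r4+r3*r4)"
    and h3: "a 3 = - a 0 * (r1*r2*r3+r1*r2*r4+r1*r3*r4+r2*r3*r4)"
    and h4: "a 4 = a 0 * (r1*r2*r3*r4)"
begin

lemma HH_fact: "HH a \<rho> = a 0^3 * kpol r1 r2 r3 r4 \<rho> * kpol r1 r3 r2 r4 \<rho> * kpol r1 r4 r2 r3 \<rho>"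
  unfolding HH_def cc1_def cc2_def cc3_def cc4_def h1 h2 h3 h4 kpol_def kA_def kB_def kC_def by algebra

lemma Kq_fact: "Kq a = - (a 0^3 * kA r1 r2 r3 r4 * kA r1 r3 r2 r4 * kA r1 r4 r2 r3)"
  unfolding Kq_def h1 h2 h3 kA_def by algebra

lemma cc4_fact: "cc4 a \<rho> = a 0 * ((\<rho>+r1)*(\<rho>+r2)*(\<rho>+r3)*(\<rho>+r4))"
  unfolding cc4_def h1 h2 h3 h4 by algebra

lemma Dq_fact: "Dq a = a 0^6 * ((r1-r2)*(r1-r3)*(r1-r4)*(r2-r3)*(r2-r4)*(r3-r4))^2"
  unfolding Dq_def Let_def h1 h2 h3 h4 by algebra

end


definition qr1 :: "complex \<Rightarrow> complex \<Rightarrow> complex \<Rightarrow> complex" where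
  "qr1 \<alpha> \<beta> \<gamma> = (-\<beta> + csqrt (\<beta>^2 - 4*\<alpha>*\<gamma>)) / (2*\<alpha>)"
definition qr2 :: "complex \<Rightarrow> complex \<Rightarrow> complex \<Rightarrow> complex" where
  "qr2 \<alpha> \<beta> \<gamma> = (-\<beta> - csqrt (\<beta>^2 - 4*\<alpha>*\<gamma>)) / (2*\<alpha>)"

lemma qvieta: assumes "\<alpha> \<noteq> 0"
  shows "qr1 \<alpha> \<beta> \<gamma> + qr2 \<alpha> \<beta> \<gamma> = -\<beta>/\<alpha>" "qr1 \<alpha> \<beta> \<gamma> * qr2 \<alpha> \<beta> \<gamma> = \<gamma>/\<alpha>"
proof -
  define s where "s = csqrt (\<beta>^2 - 4*\<alpha>*\<gamma>)"
  have s2: "s^2 = \<beta>^2 - 4*\<alpha>*\<gamma>" unfolding s_def by simp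
  show "qr1 \<alpha> \<beta> \<gamma> + qr2 \<alpha> \<beta> \<gamma> = -\<beta>/\<alpha>" unfolding qr1_def qr2_def s_def[symmetric]
    using assms by (simp add: field_simps)
  have "qr1 \<alpha> \<beta> \<gamma> * qr2 \<alpha> \<beta> \<gamma> = (\<beta>^2 - s^2)/(4*\<alpha>^2)" unfolding qr1_def qr2_def s_def[symmetric]
    using assms by (simp add: field_simps power2_eq_square)
  also have "\<dots> = \<gamma>/\<alpha>" unfolding s2 using assms by (simp add: field_simps power2_eq_square)
  finally show "qr1 \<alpha> \<beta> \<gamma> * qr2 \<alpha> \<beta> \<gamma> = \<gamma>/\<alpha>" .
qed

lemma qfact: assumes "\<alpha> \<noteq> 0"
  shows "\<alpha>*\<rho>^2+\<beta>*\<rho>+\<gamma> = \<alpha>*(\<rho> - qr1 \<alpha> \<beta> \<gamma>)*(\<rho> - qr2 \<alpha> \<beta> \<gamma>)"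
proof -
  note v = qvieta[OF assms, of \<beta> \<gamma>]
  have "\<alpha>*(\<rho> - qr1 \<alpha> \<beta> \<gamma>)*(\<rho> - qr2 \<alpha> \<beta> \<gamma>) = \<alpha>*(\<rho>^2 - (qr1 \<alpha> \<beta> \<gamma> + qr2 \<alpha> \<beta> \<gamma>)*\<rho> + qr1 \<alpha> \<beta> \<gamma> * qr2 \<alpha> \<beta> \<gamma>)"
    by (simp add: algebra_simps power2_eq_square)
  also have "\<dots> = \<alpha>*\<rho>^2+\<beta>*\<rho>+\<gamma>" unfolding v using assms by (simp add: field_simps)
  finally show ?thesis by simp
qed

lemma qdistinct: assumes "\<alpha> \<noteq> 0" "\<beta>^2 - 4*\<alpha>*\<gamma> \<noteq> 0" shows "qr1 \<alpha> \<beta> \<gamma> \<noteq> qr2 \<alpha> \<beta> \<gamma>"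
proof
  assume "qr1 \<alpha> \<beta> \<gamma> = qr2 \<alpha> \<beta> \<gamma>"
  then have "csqrt (\<beta>^2 - 4*\<alpha>*\<gamma>) = 0" using assms(1) unfolding qr1_def qr2_def
    by (simp add: field_simps)
  then show False using assms(2) by simp
qed

lemma construct:
  assumes H: "HH a \<rho> = 0" and c4: "cc4 a \<rho> \<noteq> 0" and K: "Kq a \<noteq> 0"
  shows "\<exists>t\<in>reps a. ratio t = Some \<rho>"
proof -
  define w where "w = csqrt (cc4 a \<rho>)"
  have w2: "cc4 a \<rho> = w^2" unfolding w_def by simp
  have w0: "w \<noteq> 0" using c4 w2 by auto
  define v where "v = cc3 a \<rho> / (2*w)"
  define u where "u = (cc2 a \<rho> - v^2) / (2*w)"
  have e3: "cc3 a \<rho> = 2*v*w" unfolding v_def using w0 by simp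
  have e2: "cc2 a \<rho> = v^2 + 2*u*w" unfolding u_def using w0 by (simp add: field_simps)
  have "8*w^4*(cc1 a \<rho> - 2*u*v) = 0" using H unfolding HH_def e2 e3 w2 by algebra
  then have e1: "cc1 a \<rho> = 2*u*v" using w0 by simp
  note b = shift_bwd[OF e1 e2 e3 w2]
  define m where "m = a 0 - u^2"
  define t2 where "t2 = v + 2*\<rho>*u"
  define t3 where "t3 = w + \<rho>*(v + 2*\<rho>*u) - \<rho>^2*u"
  have m0: "m \<noteq> 0"
  proof
    assume "m = 0"
    then have "(u, t2, t3, 0, 0) \<in> reps a" unfolding reps_iff
      using b unfolding m_def t2_def t3_def by simp
    then show False using R1 K by blast
  qed
  define t4 where "t4 = csqrt (csqrt m)"
  have t44: "t4^4 = m"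
  proof -
    have "t4^4 = (t4^2)^2" by (simp add: power_mult[symmetric])
    also have "\<dots> = m" unfolding t4_def by simp
    finally show ?thesis .
  qed
  have t40: "t4 \<noteq> 0" using t44 m0 by auto
  have "(u, t2, t3, t4, \<rho>*t4) \<in> reps a" unfolding reps_iff
  proof (intro conjI)
    show "a 0 = u^2 + t4^4" unfolding t44 m_def by simp
    show "a 1 = 2*u*t2 + 4*t4^3*(\<rho>*t4)" unfolding b(1) t2_def
      using t44 unfolding m_def by algebra
    show "a 2 = t2^2 + 2*u*t3 + 6*t4^2*(\<rho>*t4)^2" unfolding b(2) t2_def t3_def
      using t44 unfolding m_def by algebra
    show "a 3 = 2*t2*t3 + 4*t4*(\<rho>*t4)^3" unfolding b(3) t2_def t3_def
      using t44 unfolding m_def by algebra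
    show "a 4 = t3^2 + (\<rho>*t4)^4" unfolding b(4) t2_def t3_def
      using t44 unfolding m_def by algebra
  qed
  moreover have "ratio (u, t2, t3, t4, \<rho>*t4) = Some \<rho>" using t40 by (simp add: ratio_def)
  ultimately show ?thesis by blast
qed



lemma rep_equivI:
  assumes "\<epsilon> = 1 \<or> \<epsilon> = -1" "t1 = \<epsilon>*s1" "t2 = \<epsilon>*s2" "t3 = \<epsilon>*s3" "\<zeta>^4 = 1" "t4 = \<zeta>*s4" "t5 = \<zeta>*s5"
  shows "((s1,s2,s3,s4,s5),(t1,t2,t3,t4,t5)) \<in> rep_equiv"
  unfolding rep_equiv_def using assms by blast

lemma equiv_rep: "equiv UNIV rep_equiv"
proof (rule equivI)
  have rx: "(x, x) \<in> rep_equiv" for x :: rep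
  proof -
    obtain s1 s2 s3 s4 s5 where x: "x = (s1,s2,s3,s4,s5)" by (cases x) auto
    show ?thesis unfolding x by (rule rep_equivI[of 1 _ _ _ _ _ _ 1]) auto
  qed
  show "refl rep_equiv" by (rule refl_onI) (auto intro: rx)
  show "sym rep_equiv" unfolding sym_def
  proof (intro allI impI)
    fix x y :: rep assume xy: "(x,y) \<in> rep_equiv"
    obtain s1 s2 s3 s4 s5 where x: "x = (s1,s2,s3,s4,s5)" by (cases x) auto
    obtain t1 t2 t3 t4 t5 where y: "y = (t1,t2,t3,t4,t5)" by (cases y) auto
    from xy obtain \<epsilon> \<zeta> where e: "\<epsilon> = 1 \<or> \<epsilon> = -1" "t1 = \<epsilon>*s1" "t2 = \<epsilon>*s2" "t3 = \<epsilon>*s3"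
      and z: "\<zeta>^4 = 1" "t4 = \<zeta>*s4" "t5 = \<zeta>*s5"
      unfolding x y rep_equiv_def by blast
    have "\<zeta>^3 * \<zeta> = 1" using z(1) by (simp add: power_Suc2[symmetric] del: power_Suc)
    show "(y,x) \<in> rep_equiv" unfolding x y
    proof (rule rep_equivI[of \<epsilon> _ _ _ _ _ _ "\<zeta>^3"])
      show "\<epsilon> = 1 \<or> \<epsilon> = -1" by fact
      show "s1 = \<epsilon>*t1" "s2 = \<epsilon>*t2" "s3 = \<epsilon>*t3" using e by auto
      show "(\<zeta>^3)^4 = 1" using z(1) by (metis power_mult power_one mult.commute)
      show "s4 = \<zeta>^3*t4" "s5 = \<zeta>^3*t5" unfolding z(2,3) using \<open>\<zeta>^3 * \<zeta> = 1\<close>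
        by (metis mult.assoc mult_1)+
    qed
  qed
  show "trans rep_equiv" unfolding trans_def
  proof (intro allI impI)
    fix x y z :: rep assume xy: "(x,y) \<in> rep_equiv" and yz: "(y,z) \<in> rep_equiv"
    obtain s1 s2 s3 s4 s5 where x: "x = (s1,s2,s3,s4,s5)" by (cases x) auto
    obtain t1 t2 t3 t4 t5 where y: "y = (t1,t2,t3,t4,t5)" by (cases y) auto
    obtain r1 r2 r3 r4 r5 where zz: "z = (r1,r2,r3,r4,r5)" by (cases z) auto
    from xy obtain \<epsilon> \<zeta> where e: "\<epsilon> = 1 \<or> \<epsilon> = -1" "t1 = \<epsilon>*s1" "t2 = \<epsilon>*s2" "t3 = \<epsilon>*s3"
      and z: "\<zeta>^4 = 1" "t4 = \<zeta>*s4" "t5 = \<zeta>*s5"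
      unfolding x y rep_equiv_def by blast
    from yz obtain \<epsilon>' \<zeta>' where e': "\<epsilon>' = 1 \<or> \<epsilon>' = -1" "r1 = \<epsilon>'*t1" "r2 = \<epsilon>'*t2" "r3 = \<epsilon>'*t3"
      and z': "\<zeta>'^4 = 1" "r4 = \<zeta>'*t4" "r5 = \<zeta>'*t5"
      unfolding zz y rep_equiv_def by blast
    show "(x,z) \<in> rep_equiv" unfolding x zz
    proof (rule rep_equivI[of "\<epsilon>'*\<epsilon>" _ _ _ _ _ _ "\<zeta>'*\<zeta>"])
      show "\<epsilon>'*\<epsilon> = 1 \<or> \<epsilon>'*\<epsilon> = -1" using e(1) e'(1) by auto
      show "r1 = \<epsilon>'*\<epsilon>*s1" "r2 = \<epsilon>'*\<epsilon>*s2" "r3 = \<epsilon>'*\<epsilon>*s3" using e e' by simp_all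
      show "(\<zeta>'*\<zeta>)^4 = 1" using z z' by (simp add: power_mult_distrib)
      show "r4 = \<zeta>'*\<zeta>*s4" "r5 = \<zeta>'*\<zeta>*s5" using z z' by simp_all
    qed
  qed
  show "rep_equiv \<subseteq> UNIV \<times> UNIV" by simp
qed


lemma ratio_equiv: assumes "(x,y) \<in> rep_equiv" shows "ratio y = ratio x"
proof -
  obtain s1 s2 s3 s4 s5 where x: "x = (s1,s2,s3,s4,s5)" by (cases x) auto
  obtain t1 t2 t3 t4 t5 where y: "y = (t1,t2,t3,t4,t5)" by (cases y) auto
  from assms obtain \<zeta> where z: "\<zeta>^4 = 1" "t4 = \<zeta>*s4" "t5 = \<zeta>*s5"
    unfolding x y rep_equiv_def by blast
  have "\<zeta> \<noteq> 0" using z(1) by auto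
  then show ?thesis unfolding x y ratio_def using z by auto
qed


lemma unique:
  assumes t: "(t1,t2,t3,t4,t5) \<in> reps a" and s: "(s1,s2,s3,s4,s5) \<in> reps a"
    and t4: "t4 \<noteq> 0" and s4: "s4 \<noteq> 0" and r: "t5/t4 = s5/s4" and c4: "cc4 a (s5/s4) \<noteq> 0"
  shows "((s1,s2,s3,s4,s5),(t1,t2,t3,t4,t5)) \<in> rep_equiv"
proof -
  define \<rho> where "\<rho> = s5/s4"
  have tr: "t5 = \<rho>*t4" using t4 r unfolding \<rho>_def by (simp add: field_simps)
  have sr: "s5 = \<rho>*s4" using s4 unfolding \<rho>_def by (simp add: field_simps)
  have ft: "(t1,t2,t3,t4,\<rho>*t4) \<in> reps a" using t tr by simp
  have fs: "(s1,s2,s3,s4,\<rho>*s4) \<in> reps a" using s sr by simp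
  note T = shift_fwd[OF ft] and S = shift_fwd[OF fs]
  define Wt where "Wt = t3 - \<rho>*t2 + \<rho>^2*t1"
  define Ws where "Ws = s3 - \<rho>*s2 + \<rho>^2*s1"
  define Vt where "Vt = t2 - 2*\<rho>*t1"
  define Vs where "Vs = s2 - 2*\<rho>*s1"
  have ws: "Ws^2 = cc4 a \<rho>" using S(4) unfolding Ws_def by simp
  have ws0: "Ws \<noteq> 0" using ws c4 unfolding \<rho>_def by auto
  have "Wt^2 = Ws^2" using S(4) T(4) unfolding Wt_def Ws_def by simp
  then have "(Wt - Ws)*(Wt + Ws) = 0" by (simp add: algebra_simps power2_eq_square)
  then have "Wt = Ws \<or> Wt = -Ws" by (auto simp: add_eq_0_iff2)
  then obtain \<epsilon> where eps: "\<epsilon> = 1 \<or> \<epsilon> = -1" and we: "Wt = \<epsilon>*Ws"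
    by (metis mult_1 mult_minus1)
  have e2: "\<epsilon>^2 = 1" using eps by auto
  have "2*Vt*Wt = 2*Vs*Ws" using S(3) T(3) unfolding Wt_def Ws_def Vt_def Vs_def by simp
  then have "Ws*(\<epsilon>*Vt - Vs) = 0" unfolding we by (simp add: algebra_simps)
  then have "\<epsilon>*Vt = Vs" using ws0 by simp
  then have ve: "Vt = \<epsilon>*Vs" using e2 by (metis mult.assoc mult_1 power2_eq_square)
  have "Vt^2 + 2*t1*Wt = Vs^2 + 2*s1*Ws" using S(2) T(2) unfolding Wt_def Ws_def Vt_def Vs_def by simp
  then have "2*Ws*(\<epsilon>*t1 - s1) = 0" unfolding ve we using e2 by (simp add: algebra_simps power2_eq_square power_mult_distrib)
  then have "\<epsilon>*t1 = s1" using ws0 by simp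
  then have e1: "t1 = \<epsilon>*s1" using e2 by (metis mult.assoc mult_1 power2_eq_square)
  have e2': "t2 = \<epsilon>*s2" using ve e1 unfolding Vt_def Vs_def by (simp add: algebra_simps)
  have e3: "t3 = \<epsilon>*s3" using we e1 e2' unfolding Wt_def Ws_def by (simp add: algebra_simps)
  have "t4^4 = s4^4" using reps_E(1)[OF t] reps_E(1)[OF s] e1 e2 by (simp add: power_mult_distrib)
  define \<zeta> where "\<zeta> = t4/s4"
  have z4: "\<zeta>^4 = 1" unfolding \<zeta>_def using \<open>t4^4 = s4^4\<close> s4 by (simp add: power_divide)
  have zt: "t4 = \<zeta>*s4" unfolding \<zeta>_def using s4 by simp
  have zt5: "t5 = \<zeta>*s5" unfolding tr sr zt by simp
  show ?thesis by (rule rep_equivI[OF eps e1 e2' e3 z4 zt zt5])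
qed


lemma card_classes:
  assumes inv: "\<And>x y. x \<in> R \<Longrightarrow> y \<in> R \<Longrightarrow> ratio x = ratio y \<Longrightarrow> (x,y) \<in> rep_equiv"
  shows "card (R // rep_equiv) = card (ratio ` R)"
proof -
  have cls: "ratio ` (rep_equiv``{x}) = {ratio x}" for x
  proof
    show "ratio ` rep_equiv `` {x} \<subseteq> {ratio x}" using ratio_equiv by auto
    have "(x,x) \<in> rep_equiv" using equiv_rep by (metis equivE refl_onD UNIV_I)
    then show "{ratio x} \<subseteq> ratio ` rep_equiv `` {x}" by auto
  qed
  have inj: "inj_on (\<lambda>C. ratio ` C) (R // rep_equiv)"
  proof (rule inj_onI)
    fix C D assume C: "C \<in> R // rep_equiv" and D: "D \<in> R // rep_equiv" and e: "ratio ` C = ratio ` D"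
    from C obtain x where x: "x \<in> R" "C = rep_equiv``{x}" by (auto simp: quotient_def)
    from D obtain y where y: "y \<in> R" "D = rep_equiv``{y}" by (auto simp: quotient_def)
    have "ratio x = ratio y" using e unfolding x(2) y(2) cls by simp
    then have "(x,y) \<in> rep_equiv" using inv x y by blast
    then show "C = D" unfolding x(2) y(2) using equiv_class_eq[OF equiv_rep] by blast
  qed
  have img: "(\<lambda>C. ratio ` C) ` (R // rep_equiv) = (\<lambda>z. {z}) ` (ratio ` R)"
  proof -
    have q: "R // rep_equiv = (\<lambda>x. rep_equiv``{x}) ` R" by (auto simp: quotient_def)
    show ?thesis unfolding q image_image cls by auto
  qed
  have "card (R // rep_equiv) = card ((\<lambda>C. ratio ` C) ` (R // rep_equiv))"
    using card_image[OF inj] by simp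
  also have "\<dots> = card (ratio ` R)" unfolding img by (rule card_image) (auto intro: inj_onI)
  finally show ?thesis .
qed



lemma harm_disj:
  fixes p1 p2 p3 p4 :: complex
  assumes h: "(p1+p2)*(p3+p4) = 2*(p1*p2+p3*p4)" and d: "p1\<noteq>p2" "p3\<noteq>p4"
  shows "p1\<noteq>p3" "p1\<noteq>p4" "p2\<noteq>p3" "p2\<noteq>p4"
proof -
  show "p1\<noteq>p3"
  proof
    assume e: "p1 = p3"
    have "(p1-p2)*(p1-p4) = 0" using h unfolding e by algebra
    then show False using d e by auto
  qed
  show "p1\<noteq>p4"
  proof
    assume e: "p1 = p4"
    have "(p1-p2)*(p1-p3) = 0" using h unfolding e by algebra
    then show False using d e by auto
  qed
  show "p2\<noteq>p3"
  proof
    assume e: "p2 = p3"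
    have "(p2-p1)*(p2-p4) = 0" using h unfolding e by algebra
    then show False using d e by auto
  qed
  show "p2\<noteq>p4"
  proof
    assume e: "p2 = p4"
    have "(p2-p1)*(p2-p3) = 0" using h unfolding e by algebra
    then show False using d e by auto
  qed
qed

lemma wsq:
  fixes p1 p2 p3 p4 x y :: complex
  assumes h1: "(p1+p2)*(p3+p4) = 2*(p1*p2+p3*p4)" and h2: "(p1+p2)*(x+y) = 2*(p1*p2+x*y)"
   and h3: "(p3+p4)*(x+y) = 2*(p3*p4+x*y)" and d: "p1 \<noteq> p2" "p3\<noteq>p4" "x\<noteq>y" "p1\<noteq>p3" "p2\<noteq>p3" "p2 \<noteq> x" "p1\<noteq>x"
   "p1+p2 \<noteq> p3+p4" "p1+p2-2*p3 \<noteq> 0" "p1+p2-2*x \<noteq> 0"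
  shows "((x-p1)*(p2-p3))^2 + ((p3-p1)*(p2-x))^2 = 0"
  using assms by algebra

lemma sum_ne:
  fixes p1 p2 p3 p4 :: complex
  assumes "p1+p2 = p3+p4" "p1*p2 = p3*p4" "p1 \<noteq> p3" "p1 \<noteq> p4"
  shows False
proof -
  have "(p1-p3)*(p1-p4) = 0" using assms(1,2) by algebra
  then show False using assms(3,4) by auto
qed

lemma mid_ne:
  fixes p1 p2 p3 p4 :: complex
  assumes h: "(p1+p2)*(p3+p4) = 2*(p1*p2+p3*p4)" and "p1 \<noteq> p3"
  shows "p1+p2-2*p3 \<noteq> 0"
proof
  assume e: "p1+p2-2*p3 = 0"
  have "(p1-p3)^2 = 0" using h e by algebra
  then show False using assms(2) by simp
qed

lemma mobius_octa:
  fixes p1 p2 p3 p4 p5 p6 :: complex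
  assumes d: "p1\<noteq>p2" "p3\<noteq>p4" "p5\<noteq>p6"
    and h12: "(p1+p2)*(p3+p4) = 2*(p1*p2+p3*p4)"
    and h13: "(p1+p2)*(p5+p6) = 2*(p1*p2+p5*p6)"
    and h23: "(p3+p4)*(p5+p6) = 2*(p3*p4+p5*p6)"
  shows "\<exists>\<alpha> \<beta> \<gamma> \<delta>. \<alpha> * \<delta> - \<beta> * \<gamma> \<noteq> 0 \<and>
     mobius \<alpha> \<beta> \<gamma> \<delta> ` {Some 0, None, Some 1, Some (-1), Some \<i>, Some (-\<i>)}
       = {Some p1, Some p2, Some p3, Some p4, Some p5, Some p6}"
proof -
  note D12 = harm_disj[OF h12 d(1,2)] and D13 = harm_disj[OF h13 d(1,3)] and D23 = harm_disj[OF h23 d(2,3)]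
  have h13': "(p1+p2)*(p6+p5) = 2*(p1*p2+p6*p5)" using h13 by (simp add: ac_simps)
  have h23': "(p3+p4)*(p6+p5) = 2*(p3*p4+p6*p5)" using h23 by (simp add: ac_simps)
  have s34: "p1+p2 \<noteq> p3+p4"
  proof
    assume e: "p1+p2 = p3+p4"
    have "(p5+p6)*(p1+p2-(p3+p4)) = 2*(p1*p2 - p3*p4)" using h13 h23 by algebra
    then have "p1*p2 = p3*p4" using e by simp
    then show False using sum_ne[OF e] D12 by blast
  qed
  have m3: "p1+p2-2*p3 \<noteq> 0" by (rule mid_ne[OF h12 D12(1)])
  have m5: "p1+p2-2*p5 \<noteq> 0" by (rule mid_ne[OF h13 D13(1)])
  have m6: "p1+p2-2*p6 \<noteq> 0" by (rule mid_ne[OF h13' D13(2)])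
  define \<alpha> where "\<alpha> = p2*(p3-p1)"
  define \<beta> where "\<beta> = p1*(p2-p3)"
  define \<gamma> where "\<gamma> = p3-p1"
  define \<delta> where "\<delta> = p2-p3"
  have g0: "\<gamma> \<noteq> 0" and d0: "\<delta> \<noteq> 0" unfolding \<gamma>_def \<delta>_def using D12 by auto
  have det: "\<alpha>*\<delta> - \<beta>*\<gamma> = (p3-p1)*(p2-p3)*(p2-p1)" unfolding \<alpha>_def \<beta>_def \<gamma>_def \<delta>_def by algebra
  have det0: "\<alpha>*\<delta> - \<beta>*\<gamma> \<noteq> 0" unfolding det using D12 d(1) by auto
  let ?M = "mobius \<alpha> \<beta> \<gamma> \<delta>"
  have M0: "?M (Some 0) = Some p1" using d0 unfolding mobius_def \<beta>_def \<delta>_def by simp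
  have M1: "?M None = Some p2" using g0 unfolding mobius_def \<alpha>_def \<gamma>_def by simp
  have M2: "?M (Some 1) = Some p3"
  proof -
    have "\<gamma>*1+\<delta> = p2 - p1" unfolding \<gamma>_def \<delta>_def by simp
    then have n: "\<gamma>*1+\<delta> \<noteq> 0" using d(1) by simp
    have "(\<alpha>*1+\<beta>) = p3*(\<gamma>*1+\<delta>)" unfolding \<alpha>_def \<beta>_def \<gamma>_def \<delta>_def by algebra
    then show ?thesis using n unfolding mobius_def by simp
  qed
  have M3: "?M (Some (-1)) = Some p4"
  proof -
    have "\<gamma>*(-1)+\<delta> = p1+p2-2*p3" unfolding \<gamma>_def \<delta>_def by simp
    then have n: "\<gamma>*(-1)+\<delta> \<noteq> 0" using m3 by simp
    have "(\<alpha>*(-1)+\<beta>) = p4*(\<gamma>*(-1)+\<delta>)" using h12 unfolding \<alpha>_def \<beta>_def \<gamma>_def \<delta>_def by algebra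
    then show ?thesis using n unfolding mobius_def by simp
  qed
  have gen: "\<exists>w. (w = \<i> \<or> w = -\<i>) \<and> ?M (Some w) = Some x \<and> w = (x-p1)*\<delta>/(\<gamma>*(p2-x))"
    if hx: "(p1+p2)*(x+y) = 2*(p1*p2+x*y)" "(p3+p4)*(x+y) = 2*(p3*p4+x*y)"
      and dx: "x \<noteq> y" "p2 \<noteq> x" "p1 \<noteq> x" "p1+p2-2*x \<noteq> 0" for x y
  proof -
    define w where "w = (x-p1)*\<delta>/(\<gamma>*(p2-x))"
    have px: "p2 - x \<noteq> 0" using dx by simp
    have "w^2 = - 1"
    proof -
      have "((x-p1)*(p2-p3))^2 + ((p3-p1)*(p2-x))^2 = 0"
        by (rule wsq[OF h12 hx d(1,2) dx(1) D12(1) D12(3) dx(2,3) s34 m3 dx(4)])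
      then have e: "((x-p1)*\<delta>)^2 = -((\<gamma>*(p2-x))^2)" unfolding \<gamma>_def \<delta>_def by algebra
      have den: "(\<gamma>*(p2-x))^2 \<noteq> 0" using px g0 by simp
      have "w^2 = ((x-p1)*\<delta>)^2/(\<gamma>*(p2-x))^2" unfolding w_def by (simp add: power_divide)
      also have "\<dots> = -1" unfolding e using den by simp
      finally show ?thesis .
    qed
    then have "(w - \<i>)*(w + \<i>) = 0" by (simp add: algebra_simps power2_eq_square)
    then have wi: "w = \<i> \<or> w = -\<i>" by (auto simp: add_eq_0_iff2)
    have n: "\<gamma>*w+\<delta> = \<delta>*(p2-p1)/(p2-x)" unfolding w_def using px g0 by (simp add: field_simps)
    have n0: "\<gamma>*w+\<delta> \<noteq> 0" unfolding n using d0 d(1) px by simp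
    have dn: "\<gamma>*(p2-x) \<noteq> 0" using px g0 by simp
    have A1: "\<alpha>*w+\<beta> = (\<alpha>*((x-p1)*\<delta>) + \<beta>*(\<gamma>*(p2-x)))/(\<gamma>*(p2-x))"
      unfolding w_def using dn by (simp add: field_simps)
    have A2: "\<gamma>*w+\<delta> = (\<gamma>*((x-p1)*\<delta>) + \<delta>*(\<gamma>*(p2-x)))/(\<gamma>*(p2-x))"
      unfolding w_def using dn by (simp add: field_simps)
    have key: "\<alpha>*((x-p1)*\<delta>) + \<beta>*(\<gamma>*(p2-x)) = x*(\<gamma>*((x-p1)*\<delta>) + \<delta>*(\<gamma>*(p2-x)))"
      unfolding \<alpha>_def \<beta>_def \<gamma>_def \<delta>_def by algebra
    have "\<alpha>*w+\<beta> = x*(\<gamma>*w+\<delta>)" unfolding A1 A2 key by simp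
    then have "?M (Some w) = Some x" using n0 unfolding mobius_def by simp
    then show ?thesis using wi w_def by blast
  qed
  obtain w5 where w5: "w5 = \<i> \<or> w5 = -\<i>" "?M (Some w5) = Some p5" "w5 = (p5-p1)*\<delta>/(\<gamma>*(p2-p5))"
    using gen[OF h13 h23 d(3) D13(3) D13(1) m5] by blast
  obtain w6 where w6: "w6 = \<i> \<or> w6 = -\<i>" "?M (Some w6) = Some p6" "w6 = (p6-p1)*\<delta>/(\<gamma>*(p2-p6))"
    using gen[OF h13' h23' d(3)[symmetric] D13(4) D13(2) m6] by blast
  have "w5 \<noteq> w6" using w5(2) w6(2) d(3) by auto
  then have cases: "(w5 = \<i> \<and> w6 = -\<i>) \<or> (w5 = -\<i> \<and> w6 = \<i>)" using w5(1) w6(1) by auto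
  have "?M ` {Some 0, None, Some 1, Some (-1), Some \<i>, Some (-\<i>)}
      = {Some p1, Some p2, Some p3, Some p4, Some p5, Some p6}"
    using cases w5(2) w6(2) M0 M1 M2 M3 by auto
  then show ?thesis using det0 by blast
qed



lemma pf_sub: "poly_fun n f \<Longrightarrow> poly_fun n g \<Longrightarrow> poly_fun n (\<lambda>a. f a - g a)"
proof -
  assume f: "poly_fun n f" and g: "poly_fun n g"
  have "poly_fun n (\<lambda>a. f a + (\<lambda>a. -1) a * g a)"
    by (intro pf_add pf_mult f g pf_const)
  then show ?thesis by simp
qed

lemma pf_neg: "poly_fun n f \<Longrightarrow> poly_fun n (\<lambda>a. - f a)"
proof -
  assume f: "poly_fun n f"
  have "poly_fun n (\<lambda>a. (\<lambda>a. -1) a * f a)" by (intro pf_mult f pf_const)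
  then show ?thesis by simp
qed

lemma pf_pow: "poly_fun n f \<Longrightarrow> poly_fun n (\<lambda>a. f a ^ k)"
proof (induction k)
  case 0 then show ?case using pf_const[of n 1] by simp
next
  case (Suc k)
  have "poly_fun n (\<lambda>a. f a * f a ^ k)" by (rule pf_mult[OF Suc.prems Suc.IH[OF Suc.prems]])
  then show ?case by simp
qed

definition gg :: "(nat \<Rightarrow> complex) \<Rightarrow> complex" where "gg a = a 0 * Dq a * Kq a"

lemma gg_poly: "poly_fun 5 gg"
  unfolding gg_def Dq_def Let_def Kq_def
  by (intro pf_add pf_sub pf_mult pf_pow pf_neg pf_const pf_var; simp)

lemma gg_nonzero: "\<exists>a. gg a \<noteq> 0"
proof
  let ?a = "\<lambda>k::nat. if k = 2 \<or> k = 3 then 0 else (1::complex)"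
  show "gg ?a \<noteq> 0" unfolding gg_def Dq_def Let_def Kq_def by simp
qed

lemma harm_from:
  assumes "\<alpha> \<noteq> 0" "\<alpha>' \<noteq> 0" "2*\<alpha>*\<gamma>' + 2*\<alpha>'*\<gamma> - \<beta>*\<beta>' = 0"
  shows "(qr1 \<alpha> \<beta> \<gamma> + qr2 \<alpha> \<beta> \<gamma>)*(qr1 \<alpha>' \<beta>' \<gamma>' + qr2 \<alpha>' \<beta>' \<gamma>') =
    2*(qr1 \<alpha> \<beta> \<gamma> * qr2 \<alpha> \<beta> \<gamma> + qr1 \<alpha>' \<beta>' \<gamma>' * qr2 \<alpha>' \<beta>' \<gamma>')"
  unfolding qvieta[OF assms(1)] qvieta[OF assms(2)] using assms
  by (simp add: field_simps)

lemma kpol_root_ne: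
  assumes "kpol x1 x2 x3 x4 \<rho> = 0" "x1\<noteq>x2" "x1\<noteq>x3" "x1\<noteq>x4" "x2\<noteq>x3" "x2\<noteq>x4" "x3\<noteq>x4"
  shows "\<rho> + x1 \<noteq> 0" "\<rho> + x2 \<noteq> 0" "\<rho> + x3 \<noteq> 0" "\<rho> + x4 \<noteq> 0"
proof -
  show "\<rho> + x1 \<noteq> 0"
  proof assume "\<rho> + x1 = 0" then have "\<rho> = -x1" by (simp add: add_eq_0_iff2)
    then show False using assms kpol_at(1)[of x1 x2 x3 x4] by simp qed
  show "\<rho> + x2 \<noteq> 0"
  proof assume "\<rho> + x2 = 0" then have "\<rho> = -x2" by (simp add: add_eq_0_iff2)
    then show False using assms kpol_at(2)[of x1 x2 x3 x4] by simp qed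
  show "\<rho> + x3 \<noteq> 0"
  proof assume "\<rho> + x3 = 0" then have "\<rho> = -x3" by (simp add: add_eq_0_iff2)
    then show False using assms kpol_at(3)[of x1 x2 x3 x4] by simp qed
  show "\<rho> + x4 \<noteq> 0"
  proof assume "\<rho> + x4 = 0" then have "\<rho> = -x4" by (simp add: add_eq_0_iff2)
    then show False using assms kpol_at(4)[of x1 x2 x3 x4] by simp qed
qed

lemma kpol_split:
  assumes "kA x1 x2 x3 x4 \<noteq> 0"
  shows "kpol x1 x2 x3 x4 \<rho> = kA x1 x2 x3 x4 * (\<rho> - qr1 (kA x1 x2 x3 x4) (kB x1 x2 x3 x4) (kC x1 x2 x3 x4))
     * (\<rho> - qr2 (kA x1 x2 x3 x4) (kB x1 x2 x3 x4) (kC x1 x2 x3 x4))"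
  unfolding kpol_def by (rule qfact[OF assms])

lemma kpol_distinct:
  assumes "kA x1 x2 x3 x4 \<noteq> 0" "x1\<noteq>x3" "x1\<noteq>x4" "x2\<noteq>x3" "x2\<noteq>x4"
  shows "qr1 (kA x1 x2 x3 x4) (kB x1 x2 x3 x4) (kC x1 x2 x3 x4) \<noteq> qr2 (kA x1 x2 x3 x4) (kB x1 x2 x3 x4) (kC x1 x2 x3 x4)"
  by (rule qdistinct[OF assms(1)]) (use assms in \<open>simp add: kdisc\<close>)



lemma main_generic:
  assumes g: "gg a \<noteq> 0"
  shows "card (reps a // rep_equiv) = 6 \<and>
           (\<exists>\<alpha> \<beta> \<gamma> \<delta>. \<alpha> * \<delta> - \<beta> * \<gamma> \<noteq> 0 \<and>
              ratio ` reps a = mobius \<alpha> \<beta> \<gamma> \<delta> `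
                {Some 0, None, Some 1, Some (-1), Some \<i>, Some (-\<i>)})"
proof -
  have a0: "a 0 \<noteq> 0" and Dq: "Dq a \<noteq> 0" and Kq: "Kq a \<noteq> 0" using g unfolding gg_def by auto
  obtain r1 r2 r3 r4 where h1: "a 1 = - a 0 * (r1+r2+r3+r4)"
    and h2: "a 2 = a 0 * (r1*r2+r1*r3+r1*r4+r2*r3+r2*r4+r3*r4)"
    and h3: "a 3 = - a 0 * (r1*r2*r3+r1*r2*r4+r1*r3*r4+r2*r3*r4)"
    and h4: "a 4 = a 0 * (r1*r2*r3*r4)"
    using quartic_roots[of a, OF a0] by blast
  note facts = HH_fact[OF h1 h2 h3 h4] Kq_fact[OF h1 h2 h3 h4] cc4_fact[OF h1 h2 h3 h4] Dq_fact[OF h1 h2 h3 h4]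
  have dr: "r1\<noteq>r2" "r1\<noteq>r3" "r1\<noteq>r4" "r2\<noteq>r3" "r2\<noteq>r4" "r3\<noteq>r4"
    using Dq unfolding facts(4) by auto
  have kA: "kA r1 r2 r3 r4 \<noteq> 0" "kA r1 r3 r2 r4 \<noteq> 0" "kA r1 r4 r2 r3 \<noteq> 0"
    using Kq unfolding facts(2) by auto
  define p1 where "p1 = qr1 (kA r1 r2 r3 r4) (kB r1 r2 r3 r4) (kC r1 r2 r3 r4)"
  define p2 where "p2 = qr2 (kA r1 r2 r3 r4) (kB r1 r2 r3 r4) (kC r1 r2 r3 r4)"
  define p3 where "p3 = qr1 (kA r1 r3 r2 r4) (kB r1 r3 r2 r4) (kC r1 r3 r2 r4)"
  define p4 where "p4 = qr2 (kA r1 r3 r2 r4) (kB r1 r3 r2 r4) (kC r1 r3 r2 r4)"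
  define p5 where "p5 = qr1 (kA r1 r4 r2 r3) (kB r1 r4 r2 r3) (kC r1 r4 r2 r3)"
  define p6 where "p6 = qr2 (kA r1 r4 r2 r3) (kB r1 r4 r2 r3) (kC r1 r4 r2 r3)"
  have sA: "kpol r1 r2 r3 r4 \<rho> = kA r1 r2 r3 r4 * (\<rho> - p1) * (\<rho> - p2)" for \<rho>
    unfolding p1_def p2_def by (rule kpol_split[OF kA(1)])
  have sB: "kpol r1 r3 r2 r4 \<rho> = kA r1 r3 r2 r4 * (\<rho> - p3) * (\<rho> - p4)" for \<rho>
    unfolding p3_def p4_def by (rule kpol_split[OF kA(2)])
  have sC: "kpol r1 r4 r2 r3 \<rho> = kA r1 r4 r2 r3 * (\<rho> - p5) * (\<rho> - p6)" for \<rho>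
    unfolding p5_def p6_def by (rule kpol_split[OF kA(3)])
  have d12: "p1 \<noteq> p2" unfolding p1_def p2_def by (rule kpol_distinct) (use kA dr in auto)
  have d34: "p3 \<noteq> p4" unfolding p3_def p4_def by (rule kpol_distinct) (use kA dr in auto)
  have d56: "p5 \<noteq> p6" unfolding p5_def p6_def by (rule kpol_distinct) (use kA dr in auto)
  have h12: "(p1+p2)*(p3+p4) = 2*(p1*p2+p3*p4)" unfolding p1_def p2_def p3_def p4_def
    by (rule harm_from[OF kA(1) kA(2) apolar(1)])
  have h13: "(p1+p2)*(p5+p6) = 2*(p1*p2+p5*p6)" unfolding p1_def p2_def p5_def p6_def
    by (rule harm_from[OF kA(1) kA(3) apolar(2)])
  have h23: "(p3+p4)*(p5+p6) = 2*(p3*p4+p5*p6)" unfolding p3_def p4_def p5_def p6_def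
    by (rule harm_from[OF kA(2) kA(3) apolar(3)])
  note D12 = harm_disj[OF h12 d12 d34] and D13 = harm_disj[OF h13 d12 d56] and D23 = harm_disj[OF h23 d34 d56]
  have HHz: "HH a \<rho> = 0 \<longleftrightarrow> \<rho> \<in> {p1,p2,p3,p4,p5,p6}" for \<rho>
    unfolding facts(1) sA sB sC using a0 kA by auto
  have c4: "cc4 a \<rho> \<noteq> 0" if "HH a \<rho> = 0" for \<rho>
  proof -
    have "kpol r1 r2 r3 r4 \<rho> = 0 \<or> kpol r1 r3 r2 r4 \<rho> = 0 \<or> kpol r1 r4 r2 r3 \<rho> = 0"
      using that a0 unfolding facts(1) by auto
    then have "\<rho> + r1 \<noteq> 0 \<and> \<rho> + r2 \<noteq> 0 \<and> \<rho> + r3 \<noteq> 0 \<and> \<rho> + r4 \<noteq> 0"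
    proof (elim disjE)
      assume "kpol r1 r2 r3 r4 \<rho> = 0" from kpol_root_ne[OF this] dr show ?thesis by auto
    next
      assume "kpol r1 r3 r2 r4 \<rho> = 0" from kpol_root_ne[OF this] dr show ?thesis by auto
    next
      assume "kpol r1 r4 r2 r3 \<rho> = 0" from kpol_root_ne[OF this] dr show ?thesis by auto
    qed
    then show ?thesis unfolding facts(3) using a0 by simp
  qed
  have nz: "t4 \<noteq> 0" if "(t1,t2,t3,t4,t5) \<in> reps a" for t1 t2 t3 t4 t5
    using R1[of t1 t2 t3 t5 a] that Kq by auto
  have rat: "ratio ` reps a = Some ` {\<rho>. HH a \<rho> = 0}"
  proof
    show "ratio ` reps a \<subseteq> Some ` {\<rho>. HH a \<rho> = 0}"
    proof
      fix z assume "z \<in> ratio ` reps a"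
      then obtain t1 t2 t3 t4 t5 where t: "(t1,t2,t3,t4,t5) \<in> reps a" and z: "z = ratio (t1,t2,t3,t4,t5)"
        by auto
      have "t4 \<noteq> 0" using nz[OF t] .
      then show "z \<in> Some ` {\<rho>. HH a \<rho> = 0}" unfolding z ratio_def using R2[OF t] by auto
    qed
    show "Some ` {\<rho>. HH a \<rho> = 0} \<subseteq> ratio ` reps a"
    proof
      fix z assume "z \<in> Some ` {\<rho>. HH a \<rho> = 0}"
      then obtain \<rho> where r: "HH a \<rho> = 0" and z: "z = Some \<rho>" by auto
      from construct[OF r c4[OF r] Kq] obtain t where "t \<in> reps a" "ratio t = Some \<rho>" by blast
      then show "z \<in> ratio ` reps a" unfolding z by (metis image_eqI)
    qed
  qed
  have inv: "(x,y) \<in> rep_equiv" if x: "x \<in> reps a" and y: "y \<in> reps a" and e: "ratio x = ratio y" for x y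
  proof -
    obtain s1 s2 s3 s4 s5 where xx: "x = (s1,s2,s3,s4,s5)" by (cases x) auto
    obtain t1 t2 t3 t4 t5 where yy: "y = (t1,t2,t3,t4,t5)" by (cases y) auto
    have s4: "s4 \<noteq> 0" using nz x unfolding xx by blast
    have t4: "t4 \<noteq> 0" using nz y unfolding yy by blast
    have r: "t5/t4 = s5/s4" using e s4 t4 unfolding xx yy ratio_def by simp
    have "HH a (s5/s4) = 0" using R2 x s4 unfolding xx by blast
    from unique[OF y[unfolded yy] x[unfolded xx] t4 s4 r c4[OF this]] show ?thesis unfolding xx yy .
  qed
  have six: "Some ` {\<rho>. HH a \<rho> = 0} = {Some p1, Some p2, Some p3, Some p4, Some p5, Some p6}"
    using HHz by auto
  have "card (reps a // rep_equiv) = card (ratio ` reps a)" by (rule card_classes) (use inv in blast)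
  also have "\<dots> = 6" unfolding rat six using d12 d34 d56 D12 D13 D23 by auto
  finally have C: "card (reps a // rep_equiv) = 6" .
  from mobius_octa[OF d12 d34 d56 h12 h13 h23] obtain \<alpha> \<beta> \<gamma> \<delta> where
    "\<alpha> * \<delta> - \<beta> * \<gamma> \<noteq> 0" "mobius \<alpha> \<beta> \<gamma> \<delta> ` {Some 0, None, Some 1, Some (-1), Some \<i>, Some (-\<i>)}
       = {Some p1, Some p2, Some p3, Some p4, Some p5, Some p6}" by blast
  then show ?thesis using C unfolding rat six by metis
qed

theorem theorem4p6:
  shows "general_quartic (\<lambda>a.
           card (reps a // rep_equiv) = 6 \<and>
           (\<exists>\<alpha> \<beta> \<gamma> \<delta>. \<alpha> * \<delta> - \<beta> * \<gamma> \<noteq> 0 \<and>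
              ratio ` reps a = mobius \<alpha> \<beta> \<gamma> \<delta> `
                {Some 0, None, Some 1, Some (-1), Some \<i>, Some (-\<i>)}))"
  unfolding general_quartic_def using gg_poly gg_nonzero main_generic by blast


end
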